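(* Let $c>0$, $F>1$, $s>0$ be constants. There exist constants $\varepsilon,\alpha_2>0$ depending only on $c,F$ such that for all sufficiently large $n$: if $Z^t\le\varepsilon n$ and $\lambda^t\le F$, then $$\mathbb E[Z^{t+1}-Z^t\mid x^t,\lambda^t]\ge\alpha_2.$$
   Context: Consider the SA-$(1,\lambda)$-EA on a dynamic monotone function: a function $f:\{0,1\}^n\to\mathbb R$ is monotone if $f(x)>f(y)$ whenever $x\ne y$ and $x_i\ge y_i$ for all $i$; $(f^t)_{t\ge0}$ is a sequence of monotone functions, $f^t$ possibly chosen adversarially depending on $x^t$. The algorithm (with constants $c>0$, $s>0$, $F>1$) maintains $x^t\in\{0,1\}^n$, real $\lambda^t\ge1$; in generation $t$ it creates $\lfloor\lambda^t\rceil$ (nearest integer) offspring, each independently by flipping every bit of $x^t$ independently with probability $c/n$; $x^{t+1}$ is an offspring maximizing $f^t$ (ties uniformly at random); $\lambda^{t+1}=\max\{1,\lambda^t/F\}$ if $f^t(x^{t+1})>f^t(x^t)$, else $\lambda^{t+1}=F^{1/s}\lambda^t$. $Z^t$ is the number of zero-bits of $x^t$. *)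

theory Defs
  imports "HOL-Probability.Probability"
begin

text \<open>Bit strings of length n are bool lists (True = one-bit, False = zero-bit).\<close>

definition zeros :: "bool list \<Rightarrow> nat" where
  "zeros x = length (filter Not x)"

definition monotone_bits :: "nat \<Rightarrow> (bool list \<Rightarrow> real) \<Rightarrow> bool" where
  "monotone_bits n f \<longleftrightarrow>
     (\<forall>x y. length x = n \<and> length y = n \<and> x \<noteq> y \<and> (\<forall>i<n. y ! i \<longrightarrow> x ! i) \<longrightarrow> f x > f y)"

fun mutate :: "real \<Rightarrow> bool list \<Rightarrow> bool list pmf" where
  "mutate p [] = return_pmf []"
| "mutate p (b # bs) =
     bind_pmf (bernoulli_pmf p) (\<lambda>fl. bind_pmf (mutate p bs) (\<lambda>r. return_pmf ((b \<noteq> fl) # r)))"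

fun iid_list :: "nat \<Rightarrow> 'a pmf \<Rightarrow> 'a list pmf" where
  "iid_list 0 M = return_pmf []"
| "iid_list (Suc k) M = bind_pmf M (\<lambda>y. bind_pmf (iid_list k M) (\<lambda>ys. return_pmf (y # ys)))"

definition select_best :: "(bool list \<Rightarrow> real) \<Rightarrow> bool list list \<Rightarrow> bool list pmf" where
  "select_best f ys =
     map_pmf (\<lambda>i. ys ! i)
       (pmf_of_set {i. i < length ys \<and> (\<forall>j<length ys. f (ys ! j) \<le> f (ys ! i))})"

text \<open>Distribution of x^{t+1} in one generation of the SA-(1,lambda)-EA with mutation
  rate c/n, given x^t = x, lambda^t = lam, and fitness f^t = f.
  The number of offspring is the nearest integer to lam (round, halves rounded up).\<close>
definition ea_next :: "real \<Rightarrow> nat \<Rightarrow> real \<Rightarrow> (bool list \<Rightarrow> real) \<Rightarrow> bool list \<Rightarrow> bool list pmf" where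
  "ea_next c n lam f x =
     bind_pmf (iid_list (nat (round lam)) (mutate (c / real n) x)) (select_best f)"

end

theory Submission
  imports Defs
begin

lemma integral_bind_pmf_fin:
  fixes g :: "_ \<Rightarrow> real"
  assumes fin: "finite (set_pmf (bind_pmf M N))"
  shows "measure_pmf.expectation (bind_pmf M N) g =
         measure_pmf.expectation M (\<lambda>x. measure_pmf.expectation (N x) g)"
proof -
  define S where "S = set_pmf (bind_pmf M N)"
  define g' where "g' y = (if y \<in> S then g y else 0)" for y
  define B where "B = (\<Sum>y\<in>S. \<bar>g y\<bar>)"
  have bnd: "\<bar>g' y\<bar> \<le> B" for y
    unfolding g'_def B_def using fin S_def
    by (auto intro: member_le_sum[where f="\<lambda>y. \<bar>g y\<bar>", simplified])
  have "measure_pmf.expectation (bind_pmf M N) g = measure_pmf.expectation (bind_pmf M N) g'"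
    by (intro integral_cong_AE) (auto simp: AE_measure_pmf_iff g'_def S_def)
  also have "\<dots> = integral\<^sup>L (measure_pmf M \<bind> (\<lambda>x. measure_pmf (N x))) g'"
    by (simp add: measure_pmf_bind)
  also have "\<dots> = \<integral>x. integral\<^sup>L (measure_pmf (N x)) g' \<partial>measure_pmf M"
    by (rule integral_bind[where K="count_space UNIV" and B=B and B'=1])
       (auto simp: bnd measure_pmf.finite_measure measure_pmf.emeasure_space_1
             space_subprob_algebra intro!: prob_space_imp_subprob_space measure_pmf.prob_space_axioms intro: measurable_compose[OF _ measurable_measure_pmf] )
  also have "\<dots> = measure_pmf.expectation M (\<lambda>x. measure_pmf.expectation (N x) g)"
    by (intro integral_cong_AE) (auto simp: AE_measure_pmf_iff g'_def S_def intro!: integral_cong_AE)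
  finally show ?thesis .
qed

lemma mutate_Cons': "mutate p (b#bs) = bind_pmf (bernoulli_pmf p) (\<lambda>fl. map_pmf (\<lambda>r. (b\<noteq>fl)#r) (mutate p bs))"
  by (simp add: map_pmf_def)

lemma set_mutate: "y \<in> set_pmf (mutate p x) \<Longrightarrow> length y = length x"
  by (induction x arbitrary: y) auto

lemma finite_mutate: "finite (set_pmf (mutate p x))"
proof -
  have "set_pmf (mutate p x) \<subseteq> {xs. set xs \<subseteq> UNIV \<and> length xs = length x}"
    using set_mutate by auto
  moreover have "finite {xs::bool list. set xs \<subseteq> UNIV \<and> length xs = length x}"
    by (rule finite_lists_length_eq) simp
  ultimately show ?thesis by (rule finite_subset)
qed

lemma E_mutate_Cons:
  fixes g :: "bool list \<Rightarrow> real"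
  assumes "0 \<le> p" "p \<le> 1"
  shows "measure_pmf.expectation (mutate p (b#bs)) g =
    p * measure_pmf.expectation (mutate p bs) (\<lambda>r. g ((\<not>b)#r))
    + (1-p) * measure_pmf.expectation (mutate p bs) (\<lambda>r. g (b#r))"
proof -
  have "measure_pmf.expectation (mutate p (b#bs)) g =
     measure_pmf.expectation (bernoulli_pmf p) (\<lambda>fl. measure_pmf.expectation (map_pmf (\<lambda>r. (b\<noteq>fl)#r) (mutate p bs)) g)"
    unfolding mutate_Cons' by (rule integral_bind_pmf_fin) (metis finite_mutate mutate_Cons')
  also have "\<dots> = p * measure_pmf.expectation (mutate p bs) (\<lambda>r. g ((\<not>b)#r))
    + (1-p) * measure_pmf.expectation (mutate p bs) (\<lambda>r. g (b#r))"
    using assms by (simp add: algebra_simps)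
  finally show ?thesis .
qed

definition NZ :: "bool list \<Rightarrow> bool list \<Rightarrow> bool" where
  "NZ x y = list_all2 (\<lambda>a b. b \<longrightarrow> a) x y"

definition ind :: "bool \<Rightarrow> real" where "ind P = (if P then 1 else 0)"

fun dz :: "bool list \<Rightarrow> bool list \<Rightarrow> nat" where
  "dz (a#as) (b#bs) = (if \<not>a \<and> b then 1 else 0) + dz as bs"
| "dz _ _ = 0"

lemma zeros_Cons[simp]: "zeros (b#bs) = (if b then zeros bs else Suc (zeros bs))"
  by (simp add: zeros_def)

lemma zeros_Nil[simp]: "zeros [] = 0" by (simp add: zeros_def)

lemma E_NZ:
  assumes "0 \<le> p" "p \<le> 1"
  shows "measure_pmf.expectation (mutate p x) (\<lambda>y. ind (NZ x y)) = (1-p) ^ zeros x"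
proof (induction x)
  case Nil then show ?case by (simp add: NZ_def ind_def)
next
  case (Cons b bs)
  show ?case
    using Cons assms by (subst E_mutate_Cons[OF assms], cases b) (simp_all del: mutate.simps add: NZ_def ind_def algebra_simps)
qed

lemma E_eq:
  assumes "0 \<le> p" "p \<le> 1"
  shows "measure_pmf.expectation (mutate p x) (\<lambda>y. ind (y = x)) = (1-p) ^ length x"
proof (induction x)
  case Nil then show ?case by (simp add: ind_def)
next
  case (Cons b bs)
  show ?case
    using Cons assms by (subst E_mutate_Cons[OF assms]) (simp del: mutate.simps add: ind_def algebra_simps)
qed

lemma E_dz:
  assumes "0 \<le> p" "p \<le> 1"
  shows "measure_pmf.expectation (mutate p x) (\<lambda>y. real (dz x y)) = p * zeros x"
proof (induction x)
  case Nil then show ?case by simp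
next
  case (Cons b bs)
  have fin: "integrable (measure_pmf (mutate p bs)) f" for f :: "_ \<Rightarrow> real"
    by (rule integrable_measure_pmf_finite[OF finite_mutate])
  show ?case
    using Cons assms by (subst E_mutate_Cons[OF assms], cases b) (simp_all del: mutate.simps add: fin algebra_simps)
qed

lemma zeros_dz: "length y = length x \<Longrightarrow> zeros x \<le> zeros y + dz x y"
  by (induction x arbitrary: y) (auto simp: length_Suc_conv, fastforce+)

lemma zeros_NZ: "NZ x y \<Longrightarrow> y \<noteq> x \<Longrightarrow> zeros x + 1 \<le> zeros y"
proof (induction x arbitrary: y)
  case Nil then show ?case by (simp add: NZ_def)
next
  case (Cons a as)
  then obtain b bs where y: "y = b#bs" by (cases y) (auto simp: NZ_def)
  have l: "length bs = length as" using Cons(2) y by (metis NZ_def list.sel(3) list_all2_Cons list_all2_lengthD)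
  have z: "zeros as \<le> zeros bs" if "NZ as bs" using that
  proof (induction as arbitrary: bs)
    case Nil then show ?case by (simp add: NZ_def)
  next
    case (Cons a' as') then show ?case by (cases bs) (auto simp: NZ_def, fastforce+)
  qed
  show ?case using Cons y z by (cases a; cases b) (auto simp: NZ_def)
qed

lemma iid_Suc': "iid_list (Suc k) M = bind_pmf M (\<lambda>y. map_pmf (\<lambda>ys. y # ys) (iid_list k M))"
  by (simp add: map_pmf_def)

lemma set_iid: "ys \<in> set_pmf (iid_list k M) \<Longrightarrow> length ys = k \<and> set ys \<subseteq> set_pmf M"
  by (induction k arbitrary: ys) (auto, blast)

lemma finite_iid: "finite (set_pmf M) \<Longrightarrow> finite (set_pmf (iid_list k M))"
  by (induction k) auto

lemma E_iid_all:
  assumes fin: "finite (set_pmf M)"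
  shows "measure_pmf.expectation (iid_list k M) (\<lambda>ys. ind (list_all P ys))
       = (measure_pmf.expectation M (\<lambda>y. ind (P y))) ^ k"
proof (induction k)
  case 0 then show ?case by (simp add: ind_def)
next
  case (Suc k)
  have "measure_pmf.expectation (iid_list (Suc k) M) (\<lambda>ys. ind (list_all P ys))
     = measure_pmf.expectation M (\<lambda>y. measure_pmf.expectation (map_pmf (\<lambda>ys. y # ys) (iid_list k M)) (\<lambda>ys. ind (list_all P ys)))"
    unfolding iid_Suc' by (rule integral_bind_pmf_fin) (metis finite_iid fin iid_Suc')
  also have "\<dots> = measure_pmf.expectation M (\<lambda>y. ind (P y) * measure_pmf.expectation (iid_list k M) (\<lambda>ys. ind (list_all P ys)))"
  proof -
    have "measure_pmf.expectation (map_pmf (\<lambda>ys. y # ys) (iid_list k M)) (\<lambda>ys. ind (list_all P ys))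
        = ind (P y) * measure_pmf.expectation (iid_list k M) (\<lambda>ys. ind (list_all P ys))" for y
      by (cases "P y") (simp_all add: ind_def)
    then show ?thesis by simp
  qed
  also have "\<dots> = measure_pmf.expectation M (\<lambda>y. ind (P y)) * measure_pmf.expectation (iid_list k M) (\<lambda>ys. ind (list_all P ys))"
    by simp
  finally show ?case using Suc by simp
qed

lemma E_iid_sum:
  fixes D :: "_ \<Rightarrow> real"
  assumes fin: "finite (set_pmf M)"
  shows "measure_pmf.expectation (iid_list k M) (\<lambda>ys. sum_list (map D ys))
       = k * measure_pmf.expectation M D"
proof (induction k)
  case 0 then show ?case by simp
next
  case (Suc k)
  have int: "integrable (measure_pmf (iid_list k M)) f" for f :: "_ \<Rightarrow> real"
    by (rule integrable_measure_pmf_finite[OF finite_iid[OF fin]])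
  have intM: "integrable (measure_pmf M) f" for f :: "_ \<Rightarrow> real"
    by (rule integrable_measure_pmf_finite[OF fin])
  have "measure_pmf.expectation (iid_list (Suc k) M) (\<lambda>ys. sum_list (map D ys))
     = measure_pmf.expectation M (\<lambda>y. measure_pmf.expectation (map_pmf (\<lambda>ys. y # ys) (iid_list k M)) (\<lambda>ys. sum_list (map D ys)))"
    unfolding iid_Suc' by (rule integral_bind_pmf_fin) (metis finite_iid fin iid_Suc')
  also have "\<dots> = measure_pmf.expectation M (\<lambda>y. D y + measure_pmf.expectation (iid_list k M) (\<lambda>ys. sum_list (map D ys)))"
    by (simp add: int)
  also have "\<dots> = measure_pmf.expectation M D + measure_pmf.expectation (iid_list k M) (\<lambda>ys. sum_list (map D ys))"
    by (simp add: intM)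
  finally show ?case using Suc by (simp add: algebra_simps)
qed

lemma set_select_best:
  assumes "ys \<noteq> []"
  shows "set_pmf (select_best f ys) \<subseteq> set ys"
proof -
  define I where "I = {i. i < length ys \<and> (\<forall>j<length ys. f (ys ! j) \<le> f (ys ! i))}"
  have "finite I" unfolding I_def by auto
  obtain m where m: "m \<in> set ys" "\<forall>z\<in>set ys. f z \<le> f m"
  proof -
    have "Max (f ` set ys) \<in> f ` set ys" using assms by (intro Max_in) auto
    then obtain m where "m \<in> set ys" "f m = Max (f ` set ys)" by auto
    then show ?thesis using that by auto
  qed
  then obtain i where "i < length ys" "ys ! i = m" by (auto simp: in_set_conv_nth)
  then have "i \<in> I" using m unfolding I_def by auto
  then have "I \<noteq> {}" by auto
  then have "set_pmf (pmf_of_set I) = I" using \<open>finite I\<close> by simp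
  then show ?thesis unfolding select_best_def I_def[symmetric] by (auto simp: I_def)
qed

lemma finite_select_best: "ys \<noteq> [] \<Longrightarrow> finite (set_pmf (select_best f ys))"
  using set_select_best[of ys f] finite_subset by blast

lemma core:
  fixes p :: real and k :: nat
  assumes p: "0 \<le> p" "p \<le> 1" and k: "k \<ge> 1"
  shows "measure_pmf.expectation (bind_pmf (iid_list k (mutate p x)) (select_best f))
           (\<lambda>y. real (zeros y) - real (zeros x))
         \<ge> ((1-p)^zeros x - (1-p)^length x)^k - k * (p * zeros x)"
proof -
  define M where "M = mutate p x"
  define Q where "Q = iid_list k M"
  define g where "g y = real (zeros y) - real (zeros x)" for y
  define h where "h ys = ind (list_all (\<lambda>y. NZ x y \<and> y \<noteq> x) ys) - sum_list (map (\<lambda>y. real (dz x y)) ys)" for ys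
  have finM: "finite (set_pmf M)" unfolding M_def by (rule finite_mutate)
  have finQ: "finite (set_pmf Q)" unfolding Q_def by (rule finite_iid[OF finM])
  have intM: "integrable (measure_pmf M) f" for f :: "_ \<Rightarrow> real"
    by (rule integrable_measure_pmf_finite[OF finM])
  have intQ: "integrable (measure_pmf Q) f" for f :: "_ \<Rightarrow> real"
    by (rule integrable_measure_pmf_finite[OF finQ])
  have pw: "h ys \<le> measure_pmf.expectation (select_best f ys) g" if ys: "ys \<in> set_pmf Q" for ys
  proof -
    have lys: "length ys = k" and sys: "set ys \<subseteq> set_pmf M" using set_iid ys unfolding Q_def by auto
    then have ne: "ys \<noteq> []" using k by auto
    show ?thesis
    proof (rule measure_pmf.integral_ge_const)
      show "integrable (measure_pmf (select_best f ys)) g"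
        by (rule integrable_measure_pmf_finite[OF finite_select_best[OF ne]])
      show "AE y in measure_pmf (select_best f ys). h ys \<le> g y"
      proof (unfold AE_measure_pmf_iff, intro ballI)
        fix y assume "y \<in> set_pmf (select_best f ys)"
        then have yin: "y \<in> set ys" using set_select_best[OF ne] by auto
        then have ly: "length y = length x" using sys set_mutate unfolding M_def by auto
        have s1: "real (dz x y) \<le> sum_list (map (\<lambda>y. real (dz x y)) ys)"
          using yin by (intro member_le_sum_list) auto
        have s0: "0 \<le> sum_list (map (\<lambda>y. real (dz x y)) ys)"
          by (intro sum_list_nonneg) auto
        show "h ys \<le> g y"
        proof (cases "list_all (\<lambda>y. NZ x y \<and> y \<noteq> x) ys")
          case True
          then have "NZ x y" "y \<noteq> x" using yin by (auto simp: list_all_iff)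
          then have "zeros x + 1 \<le> zeros y" by (rule zeros_NZ)
          then show ?thesis using True s0 unfolding h_def g_def ind_def by simp
        next
          case False
          have "zeros x \<le> zeros y + dz x y" using zeros_dz[OF ly] .
          then show ?thesis using False s1 unfolding h_def g_def ind_def by simp
        qed
      qed
    qed
  qed
  have "measure_pmf.expectation (bind_pmf Q (select_best f)) g
      = measure_pmf.expectation Q (\<lambda>ys. measure_pmf.expectation (select_best f ys) g)"
    proof (rule integral_bind_pmf_fin)
    have "\<forall>ys\<in>set_pmf Q. finite (set_pmf (select_best f ys))"
    proof
      fix ys assume "ys \<in> set_pmf Q"
      then have "length ys = k" using set_iid unfolding Q_def by blast
      then have "ys \<noteq> []" using k by auto
      then show "finite (set_pmf (select_best f ys))" by (rule finite_select_best)
    qed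
    then show "finite (set_pmf (bind_pmf Q (select_best f)))" using finQ by simp
  qed
  also have "\<dots> \<ge> measure_pmf.expectation Q h"
    by (rule integral_mono_AE) (auto simp: intQ AE_measure_pmf_iff pw)
  finally have A: "measure_pmf.expectation (bind_pmf Q (select_best f)) g \<ge> measure_pmf.expectation Q h" .
  have "measure_pmf.expectation Q h =
     measure_pmf.expectation Q (\<lambda>ys. ind (list_all (\<lambda>y. NZ x y \<and> y \<noteq> x) ys))
     - measure_pmf.expectation Q (\<lambda>ys. sum_list (map (\<lambda>y. real (dz x y)) ys))"
    unfolding h_def by (rule Bochner_Integration.integral_diff) (auto simp: intQ)
  also have "\<dots> = (measure_pmf.expectation M (\<lambda>y. ind (NZ x y \<and> y \<noteq> x)))^k
     - k * measure_pmf.expectation M (\<lambda>y. real (dz x y))"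
    unfolding Q_def by (simp add: E_iid_all[OF finM] E_iid_sum[OF finM])
  also have "measure_pmf.expectation M (\<lambda>y. ind (NZ x y \<and> y \<noteq> x))
     = measure_pmf.expectation M (\<lambda>y. ind (NZ x y) - ind (y = x))"
    by (intro Bochner_Integration.integral_cong) (auto simp: ind_def NZ_def list.rel_refl)
  also have "\<dots> = (1-p)^zeros x - (1-p)^length x"
    unfolding M_def by (subst Bochner_Integration.integral_diff) (auto simp: integrable_measure_pmf_finite[OF finite_mutate] E_NZ[OF p] E_eq[OF p])
  also have "measure_pmf.expectation M (\<lambda>y. real (dz x y)) = p * zeros x"
    unfolding M_def by (rule E_dz[OF p])
  finally show ?thesis using A unfolding Q_def M_def g_def by simp
qed

theorem mainTheorem18:
  fixes c F :: real
  assumes "c > 0" and "F > 1"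
  shows "\<exists>\<epsilon> > 0. \<exists>\<alpha>\<^sub>2 > 0. \<exists>n\<^sub>0 :: nat. \<forall>n \<ge> n\<^sub>0.
           \<forall>(x :: bool list) (lam :: real) (f :: bool list \<Rightarrow> real).
             length x = n \<longrightarrow> monotone_bits n f \<longrightarrow> 1 \<le> lam \<longrightarrow> lam \<le> F \<longrightarrow>
             real (zeros x) \<le> \<epsilon> * real n \<longrightarrow>
             measure_pmf.expectation (ea_next c n lam f x)
               (\<lambda>y. real (zeros y) - real (zeros x)) \<ge> \<alpha>\<^sub>2"
proof -
  note c = \<open>c > 0\<close>
  define K where "K = nat (round F)"
  have "round (1::real) \<le> round F" using \<open>F > 1\<close> by (intro round_mono) simp
  then have K1: "K \<ge> 1" unfolding K_def by simp
  define q where "q = 1 - exp (-c)"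
  have q0: "q > 0" unfolding q_def using c by simp
  have q1: "q \<le> 1" unfolding q_def by simp
  define p0 where "p0 = q / 2"
  have p00: "p0 > 0" "p0 \<le> 1" unfolding p0_def using q0 q1 by auto
  define \<alpha> where "\<alpha> = p0 ^ K / 2"
  have \<alpha>0: "\<alpha> > 0" unfolding \<alpha>_def using p00 by simp
  define \<epsilon> where "\<epsilon> = min (1/2) (min (q/(2*c)) (\<alpha>/(K*c)))"
  have \<epsilon>0: "\<epsilon> > 0" unfolding \<epsilon>_def using q0 \<alpha>0 c K1 by auto
  have e1: "c * \<epsilon> \<le> q/2"
  proof -
    have "\<epsilon> \<le> q/(2*c)" unfolding \<epsilon>_def by simp
    then have "c * \<epsilon> \<le> c * (q/(2*c))" using c by (intro mult_left_mono) auto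
    also have "\<dots> = q/2" using c by simp
    finally show ?thesis .
  qed
  have e2: "K * (c * \<epsilon>) \<le> \<alpha>"
  proof -
    have "\<epsilon> \<le> \<alpha>/(K*c)" unfolding \<epsilon>_def by simp
    then have "(K*c) * \<epsilon> \<le> \<alpha>" using c K1 by (simp add: pos_le_divide_eq mult.commute)
    then show ?thesis by (simp add: mult.assoc)
  qed
  define n0 where "n0 = nat \<lceil>c\<rceil> + 1"
  have main: "\<alpha> \<le> measure_pmf.expectation (ea_next c n lam f x)
               (\<lambda>y. real (zeros y) - real (zeros x))"
    if n: "n0 \<le> n" and lx: "length x = n" and l1: "1 \<le> lam" and lF: "lam \<le> F"
      and Z: "real (zeros x) \<le> \<epsilon> * real n" for n x lam f
  proof -
    have cn: "c < real n"
    proof -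
      have "c \<le> real (nat \<lceil>c\<rceil>)" by linarith
      then show ?thesis using n unfolding n0_def by linarith
    qed
    then have npos: "real n > 0" using c by linarith
    define p where "p = c / real n"
    have p0: "0 \<le> p" "p \<le> 1" unfolding p_def using c cn npos by auto
    define k where "k = nat (round lam)"
    have "round (1::real) \<le> round lam" using l1 by (intro round_mono)
    then have k1: "k \<ge> 1" unfolding k_def by simp
    have "round lam \<le> round F" using lF by (rule round_mono)
    then have kK: "k \<le> K" unfolding k_def K_def by simp
    define Zr where "Zr = real (zeros x)"
    have pZ: "p * Zr \<le> c * \<epsilon>"
    proof -
      have e: "p * Zr = c * (Zr / real n)" unfolding p_def by simp
      have "Zr / real n \<le> \<epsilon>" using Z npos unfolding Zr_def by (simp add: divide_le_eq)
      then have "c * (Zr / real n) \<le> c * \<epsilon>" using c by (intro mult_left_mono) auto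
      then show ?thesis using e by simp
    qed
    have b1: "1 - Zr * p \<le> (1-p) ^ zeros x"
      using Bernoulli_inequality[of "-p" "zeros x"] p0 unfolding Zr_def by simp
    have b2: "(1-p) ^ n \<le> exp (-c)"
    proof -
      have "(1-p) ^ n \<le> exp (-p) ^ n"
        using p0 by (intro power_mono) (auto simp: exp_ge_add_one_self[of "-p", simplified])
      also have "\<dots> = exp (real n * (-p))" by (rule exp_of_nat_mult[symmetric])
      also have "real n * (-p) = -c" unfolding p_def using npos by simp
      finally show ?thesis .
    qed
    define P where "P = (1-p)^zeros x - (1-p)^length x"
    have P: "p0 \<le> P" unfolding P_def p0_def using b1 b2 pZ e1 lx unfolding q_def
      by (simp add: mult.commute)
    have "p0 ^ K \<le> p0 ^ k" using p00 kK by (intro power_decreasing) auto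
    also have "\<dots> \<le> P ^ k" using P p00 by (intro power_mono) auto
    finally have PK: "p0 ^ K \<le> P ^ k" .
    have kp: "real k * (p * Zr) \<le> \<alpha>"
    proof -
      have "real k * (p * Zr) \<le> real K * (c * \<epsilon>)"
        by (rule mult_mono) (use kK pZ p0 in \<open>auto simp: Zr_def\<close>)
      then show ?thesis using e2 by simp
    qed
    have "P ^ k - real k * (p * Zr) \<le> measure_pmf.expectation (ea_next c n lam f x)
               (\<lambda>y. real (zeros y) - real (zeros x))"
      using core[OF p0 k1, of x f] unfolding ea_next_def P_def Zr_def p_def k_def .
    then have "\<alpha> \<le> measure_pmf.expectation (ea_next c n lam f x)
               (\<lambda>y. real (zeros y) - real (zeros x))"
      using PK kp unfolding \<alpha>_def by linarith
    then show ?thesis .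
  qed
  show ?thesis using \<epsilon>0 \<alpha>0 main by blast
qed

end
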